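(* Let $N\in\mathbb{N}$. Let $$\mathcal{B}(N)=\{(q_1,q_2)\in\mathbb{Z}^2\mid 4q_1^2+4q_2^2+4q_1q_2+2q_1+3q_2=N\},$$ let $\mathcal{U}(12N+7)=\{(x,y)\in\mathbb{Z}^2\mid x^2+3y^2=12N+7\}$, and let $\varphi:\mathcal{B}(N)\to\mathcal{U}(12N+7)$ be the (well-defined) map $\varphi(q_1,q_2)=(6q_2+2,\,4q_1+2q_2+1)$. Let the Klein four-group $V_4$ act on $\mathcal{U}(12N+7)$ by sign changes of each coordinate, i.e. its nontrivial elements send $(x,y)$ to $(-x,y)$, $(x,-y)$, $(-x,-y)$. Then: (1) the action of $V_4$ on $\mathcal{U}(12N+7)$ is free; (2) $\varphi(\mathcal{B}(N))$ is a complete set of representatives of the $V_4$-orbits of $\mathcal{U}(12N+7)$.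
   Context: The expression $4q_1^2+4q_2^2+4q_1q_2+2q_1+3q_2$ is the $\Lambda_0$-atomic length of the element $q=q_1\varepsilon_1+q_2\varepsilon_2-(q_1+q_2)\varepsilon_3$ of the lattice $M$ in affine type $D_4^{(3)}$, so $\mathcal{B}(N)$ parametrises the affine Grassmannian elements of type $D_4^{(3)}$ of atomic length $N$. *)

theory Defs
  imports Main
begin

definition B_set :: "nat \<Rightarrow> (int \<times> int) set" where
  "B_set N = {(q1, q2). 4*q1^2 + 4*q2^2 + 4*q1*q2 + 2*q1 + 3*q2 = int N}"

definition U_set :: "int \<Rightarrow> (int \<times> int) set" where
  "U_set M = {(x, y). x^2 + 3*y^2 = M}"

definition phi :: "int \<times> int \<Rightarrow> int \<times> int" where
  "phi = (\<lambda>(q1, q2). (6*q2 + 2, 4*q1 + 2*q2 + 1))"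

text \<open>Klein four-group V4 modelled as bool \<times> bool (componentwise xor),
  identity (False, False); (a,b) flips the sign of x iff a, of y iff b.\<close>
definition v4_act :: "bool \<times> bool \<Rightarrow> int \<times> int \<Rightarrow> int \<times> int" where
  "v4_act = (\<lambda>(a, b) (x, y). (if a then - x else x, if b then - y else y))"

definition v4_orbit :: "int \<times> int \<Rightarrow> (int \<times> int) set" where
  "v4_orbit u = {v4_act g u | g. True}"

end

theory Submission
  imports Defs
begin

lemma ident: "(6*q2+2)^2 + 3*(4*q1+2*q2+1)^2
   = 12*(4*q1^2 + 4*q2^2 + 4*q1*q2 + 2*q1 + 3*q2) + (7::int)"
  by (simp add: power2_eq_square algebra_simps)

lemma charB:
  "((x::int),(y::int)) \<in> phi ` B_set N \<longleftrightarrow>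
    x^2 + 3*y^2 = 12 * int N + 7 \<and> x mod 6 = 2 \<and> (y - 1 - 2*((x-2) div 6)) mod 4 = 0"
proof
  assume "(x,y) \<in> phi ` B_set N"
  then obtain q1 q2 where q: "4*q1^2 + 4*q2^2 + 4*q1*q2 + 2*q1 + 3*q2 = int N"
    and xy: "x = 6*q2+2" "y = 4*q1+2*q2+1"
    by (auto simp: B_set_def phi_def)
  have "x^2 + 3*y^2 = 12 * int N + 7" using ident[of q2 q1] q xy by simp
  moreover have "(x-2) div 6 = q2" using xy by simp
  ultimately show "x^2 + 3*y^2 = 12 * int N + 7 \<and> x mod 6 = 2 \<and> (y - 1 - 2*((x-2) div 6)) mod 4 = 0"
    using xy by simp
next
  assume a: "x^2 + 3*y^2 = 12 * int N + 7 \<and> x mod 6 = 2 \<and> (y - 1 - 2*((x-2) div 6)) mod 4 = 0"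
  define q2 where "q2 = (x-2) div 6"
  define q1 where "q1 = (y - 1 - 2*q2) div 4"
  have a2: "x mod 6 = 2" and a3: "(y - 1 - 2*((x-2) div 6)) mod 4 = 0" using a by auto
  have x: "x = 6*q2+2" using a2 unfolding q2_def by presburger
  have a3': "(y - 1 - 2*q2) mod 4 = 0" using a3 q2_def by simp
  have y: "y = 4*q1+2*q2+1" using a3' unfolding q1_def by presburger
  have "12*(4*q1^2 + 4*q2^2 + 4*q1*q2 + 2*q1 + 3*q2) + 7 = 12 * int N + 7"
    using ident[of q2 q1] a x y by simp
  hence "4*q1^2 + 4*q2^2 + 4*q1*q2 + 2*q1 + 3*q2 = int N" by simp
  hence "(q1,q2) \<in> B_set N" by (simp add: B_set_def)
  moreover have "phi (q1,q2) = (x,y)" using x y by (simp add: phi_def)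
  ultimately show "(x,y) \<in> phi ` B_set N" by force
qed

lemma m1: "4*(a::int)+1 \<noteq> 12*b+7" by presburger
lemma m2: "4*(a::int) \<noteq> 12*b+7" by presburger
lemma m3: "3*(a::int) \<noteq> 12*b+7" by presburger

lemma props:
  assumes e: "(x::int)^2 + 3*y^2 = 12 * int N + 7"
  shows "x mod 2 = 0 \<and> x mod 3 \<noteq> 0 \<and> y mod 2 = 1"
proof -
  have xe: "x mod 2 = 0"
  proof (rule ccontr)
    assume "x mod 2 \<noteq> 0"
    then have "x = 2*(x div 2)+1" by presburger
    then obtain k where k: "x = 2*k+1" by blast
    have "y = 2*(y div 2) \<or> y = 2*(y div 2) + 1" by presburger
    then consider m where "y = 2*m" | m where "y = 2*m+1" by blast
    then show False
    proof cases
      case (1 m)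
      have "x^2+3*y^2 = 4*(k^2+k+3*m^2)+1" using k 1 by (simp add: power2_eq_square algebra_simps)
      then show False using e m1 m2 m3 by metis
    next
      case (2 m)
      have "x^2+3*y^2 = 4*(k^2+k+3*m^2+3*m+1)" using k 2 by (simp add: power2_eq_square algebra_simps)
      then show False using e m1 m2 m3 by metis
    qed
  qed
  have x3: "x mod 3 \<noteq> 0"
  proof
    assume "x mod 3 = 0"
    then have "x = 3*(x div 3)" by presburger
    then obtain k where k: "x = 3*k" by blast
    have "x^2+3*y^2 = 3*(3*k^2+y^2)" using k by (simp add: power2_eq_square algebra_simps)
    then show False using e m1 m2 m3 by metis
  qed
  have "y mod 2 = 1"
  proof (rule ccontr)
    assume "y mod 2 \<noteq> 1"
    then have "y = 2*(y div 2)" by presburger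
    then obtain m where m: "y = 2*m" by blast
    have "x = 2*(x div 2)" using xe by presburger
    then obtain k where k: "x = 2*k" by blast
    have "x^2+3*y^2 = 4*(k^2+3*m^2)" using k m by (simp add: power2_eq_square algebra_simps)
    then show False using e m1 m2 m3 by metis
  qed
  with xe x3 show ?thesis by simp
qed

lemma orbit_iff: "(a,b) \<in> v4_orbit (x,y) \<longleftrightarrow> (a = x \<or> a = -x) \<and> (b = y \<or> b = -y)"
proof
  assume "(a,b) \<in> v4_orbit (x,y)"
  then obtain g where "(a,b) = v4_act g (x,y)" by (auto simp: v4_orbit_def)
  then show "(a = x \<or> a = -x) \<and> (b = y \<or> b = -y)"
    by (cases g) (auto simp: v4_act_def split: if_splits)
next
  assume h: "(a = x \<or> a = -x) \<and> (b = y \<or> b = -y)"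
  have "(a,b) = v4_act (a \<noteq> x, b \<noteq> y) (x,y)"
    using h by (auto simp: v4_act_def)
  then show "(a,b) \<in> v4_orbit (x,y)" by (auto simp: v4_orbit_def)
qed

theorem theorem8p27:
  fixes N :: nat
  shows "phi ` B_set N \<subseteq> U_set (12 * int N + 7)
    \<and> (\<forall>u\<in>U_set (12 * int N + 7). \<forall>g. v4_act g u = u \<longrightarrow> g = (False, False))
    \<and> (\<forall>u\<in>U_set (12 * int N + 7). \<exists>!r. r \<in> phi ` B_set N \<and> r \<in> v4_orbit u)"
proof (intro conjI ballI allI impI)
  show "phi ` B_set N \<subseteq> U_set (12 * int N + 7)"
  proof
    fix r assume "r \<in> phi ` B_set N"
    then show "r \<in> U_set (12 * int N + 7)"
      by (cases r) (simp add: charB U_set_def)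
  qed
next
  fix u g assume u: "u \<in> U_set (12 * int N + 7)" and g: "v4_act g u = u"
  obtain x y where uxy: "u = (x,y)" by force
  have e: "x^2 + 3*y^2 = 12 * int N + 7" using u uxy by (simp add: U_set_def)
  have p: "x mod 2 = 0 \<and> x mod 3 \<noteq> 0 \<and> y mod 2 = 1" using props[OF e] .
  have "x \<noteq> 0" using p by auto
  have "y \<noteq> 0" using p by auto
  then show "g = (False, False)" using g uxy \<open>x \<noteq> 0\<close>
    by (cases g) (auto simp: v4_act_def split: if_splits)
next
  fix u assume u: "u \<in> U_set (12 * int N + 7)"
  obtain x y where uxy: "u = (x,y)" by force
  have e: "x^2 + 3*y^2 = 12 * int N + 7" using u uxy by (simp add: U_set_def)
  have p: "x mod 2 = 0 \<and> x mod 3 \<noteq> 0 \<and> y mod 2 = 1" using props[OF e] .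
  define sx where "sx = (if x mod 6 = 2 then x else -x)"
  have x6: "x mod 2 = 0" "x mod 3 \<noteq> 0" using p by auto
  have sx: "sx mod 6 = 2"
  proof (cases "x mod 6 = 2")
    case False
    have "-x mod 6 = 2" using False x6 by presburger
    then show ?thesis using False unfolding sx_def by simp
  qed (simp add: sx_def)
  define q2 where "q2 = (sx-2) div 6"
  define sy where "sy = (if (y - 1 - 2*q2) mod 4 = 0 then y else -y)"
  have y2: "y mod 2 = 1" using p by auto
  have sy: "(sy - 1 - 2*q2) mod 4 = 0"
  proof (cases "(y - 1 - 2*q2) mod 4 = 0")
    case False
    have "(-y - 1 - 2*q2) mod 4 = 0" using False y2 by presburger
    then show ?thesis using False unfolding sy_def by simp
  qed (simp add: sy_def)
  have "sx^2 = x^2" unfolding sx_def by simp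
  moreover have "sy^2 = y^2" unfolding sy_def by simp
  ultimately have e2: "sx^2 + 3*sy^2 = 12 * int N + 7" using e by simp
  have r1: "(sx,sy) \<in> phi ` B_set N" unfolding charB using sx sy e2 q2_def by simp
  have "sx = x \<or> sx = -x" unfolding sx_def by simp
  moreover have "sy = y \<or> sy = -y" unfolding sy_def by simp
  ultimately have r2: "(sx,sy) \<in> v4_orbit u" unfolding uxy orbit_iff by simp
  show "\<exists>!r. r \<in> phi ` B_set N \<and> r \<in> v4_orbit u"
  proof (rule ex1I[of _ "(sx,sy)"])
    show "(sx,sy) \<in> phi ` B_set N \<and> (sx,sy) \<in> v4_orbit u" using r1 r2 by simp
  next
    fix r assume r: "r \<in> phi ` B_set N \<and> r \<in> v4_orbit u"
    obtain a b where rab: "r = (a,b)" by force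
    have c: "a mod 6 = 2" "(b - 1 - 2*((a-2) div 6)) mod 4 = 0"
      using r unfolding rab charB by auto
    have o: "(a = x \<or> a = -x) \<and> (b = y \<or> b = -y)" using r unfolding rab uxy orbit_iff by simp
    have "a = sx"
    proof (cases "x mod 6 = 2")
      case True
      have "-x mod 6 \<noteq> 2" using True by presburger
      then show ?thesis using True o c unfolding sx_def by auto
    next
      case False
      then show ?thesis using o c unfolding sx_def by auto
    qed
    hence "(a-2) div 6 = q2" using q2_def by simp
    hence c2: "(b - 1 - 2*q2) mod 4 = 0" using c by simp
    have yo: "y mod 2 = 1" using p by simp
    have "b = sy"
    proof (cases "(y - 1 - 2*q2) mod 4 = 0")
      case True
      have "(-y - 1 - 2*q2) mod 4 \<noteq> 0" using True yo by presburger
      then show ?thesis using True o c2 unfolding sy_def by auto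
    next
      case False
      then show ?thesis using o c2 unfolding sy_def by auto
    qed
    with \<open>a = sx\<close> rab show "r = (sx,sy)" by simp
  qed
qed

end
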